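(* Fix $n\in\mathbb N$ and suppose there is an algorithm for $n$ values in the discrete-time model that is $\alpha$-consistent and $\beta$-robust for the MaxProb objective. Then for every $K\in\mathbb N$ and every predicted prior $\tilde F$ supported on $[K]$ with $\tilde f(1)>0$, there exist real numbers $\{y_{t,\ell}\}_{t\in\{0,1,\dots,n\},\,\ell\in[K]}$ satisfying: (i) $y_{0,\ell}=1$ for all $\ell\in[K]$; (ii) $0\le y_{t,\ell}\le1$ for all $t\in[n],\ell\in[K]$; (iii) for all $t\in[n],\ell\in[K]$: $\Delta^t(\ell)\,y_{t,\ell}-\Delta^{t-1}(\ell)\tilde F(\ell-1)\,y_{t-1,\ell}\ge0$; (iv) for all $t\in[n],\ell\in[K]$: $\Delta^t(\ell)\,y_{t,\ell}-\Delta^{t-1}(\ell)\tilde F(\ell-1)\,y_{t-1,\ell}\le\sum_{m\in[\ell]}\Delta^{t-1}(m)\,\tilde f(\ell)\,y_{t-1,m}$; (v) $\displaystyle\sum_{t\in[n]}\sum_{\ell\in[K]}\tilde F(\ell)^{n-t}\Big(\sum_{m\in[\ell]}\Delta^{t-1}(m)\tilde f(\ell)y_{t-1,m}+\Delta^{t-1}(\ell)\tilde F(\ell-1)y_{t-1,\ell}-\Delta^t(\ell)y_{t,\ell}\Big)\ge\alpha$; (vi) for all $k\in[K]$: $\displaystyle\sum_{t\in[n]}\sum_{\ell\in[k]}\frac{\tilde F(\ell)^{n-t}}{\tilde F(k)^n}\Big(\sum_{m\in[\ell]}\Delta^{t-1}(m)\tilde f(\ell)y_{t-1,m}+\Delta^{t-1}(\ell)\tilde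 F(\ell-1)y_{t-1,\ell}-\Delta^t(\ell)y_{t,\ell}\Big)\ge\beta$.
   Context: Discrete-time model: $n$ values $x_1,\dots,x_n$ are drawn i.i.d. from an unknown prior $F$ (a distribution on $[0,\infty)$, possibly discrete) and revealed in the order $x_1,x_2,\dots,x_n$; upon seeing $x_t$ an online algorithm (knowing $n$, a predicted prior $\tilde F$, the values seen so far, and internal randomness) must irrevocably accept or reject it; at most one value is accepted. MaxProb with the all-ties-win convention: the algorithm succeeds if the accepted value equals $\max_i x_i$. The competitive ratio is the success probability; $\alpha$-consistent means $\alpha$-competitive for every $F$ when $\tilde F=F$; $\beta$-robust means $\beta$-competitive for every $F$ and every $\tilde F$. Here $[K]=\{1,\dots,K\}$, $\tilde F$ is a distribution on $[K]$ with cdf $\tilde F$ (with $\tilde F(0)=0$) and pmf $\tilde f$. For $t\in[n]$, $\Delta^t(\ell)=\tilde F(\ell)^t-\tilde F(\ell-1)^t$, and $\Delta^0(\ell)=1$ if $\ell=1$ and $0$ otherwise. *)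

theory Defs
  imports "HOL-Probability.Probability"
begin

definition prior :: "real measure \<Rightarrow> bool" where
  "prior F \<longleftrightarrow> prob_space F \<and> sets F = sets borel \<and> (AE x in F. 0 \<le> x)"

text \<open>A (randomized) online algorithm for n values in behavioural form:
  A Ft t x is the probability of accepting the value x t (0-indexed step t),
  given the predicted prior Ft and that nothing was accepted before; it may only
  depend on x 0, ..., x t (non-anticipation) and must be measurable.\<close>
definition online_alg :: "nat \<Rightarrow> (real measure \<Rightarrow> nat \<Rightarrow> (nat \<Rightarrow> real) \<Rightarrow> real) \<Rightarrow> bool" where
  "online_alg n A \<longleftrightarrow>
     (\<forall>Ft t x. 0 \<le> A Ft t x \<and> A Ft t x \<le> 1) \<and>
     (\<forall>Ft t x x'. (\<forall>i\<le>t. x i = x' i) \<longrightarrow> A Ft t x = A Ft t x') \<and>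
     (\<forall>Ft t. A Ft t \<in> borel_measurable (PiM {..<n} (\<lambda>_. borel)))"

definition success_prob ::
  "nat \<Rightarrow> (real measure \<Rightarrow> nat \<Rightarrow> (nat \<Rightarrow> real) \<Rightarrow> real) \<Rightarrow> real measure \<Rightarrow> real measure \<Rightarrow> real" where
  "success_prob n A Ft F =
     (\<integral>x. (\<Sum>t<n. (\<Prod>s<t. 1 - A Ft s x) * A Ft t x *
              (if x t = Max (x ` {..<n}) then 1 else 0)) \<partial>(PiM {..<n} (\<lambda>_. F)))"

definition consistent :: "nat \<Rightarrow> (real measure \<Rightarrow> nat \<Rightarrow> (nat \<Rightarrow> real) \<Rightarrow> real) \<Rightarrow> real \<Rightarrow> bool" where
  "consistent n A \<alpha> \<longleftrightarrow> (\<forall>F. prior F \<longrightarrow> success_prob n A F F \<ge> \<alpha>)"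

definition robust :: "nat \<Rightarrow> (real measure \<Rightarrow> nat \<Rightarrow> (nat \<Rightarrow> real) \<Rightarrow> real) \<Rightarrow> real \<Rightarrow> bool" where
  "robust n A \<beta> \<longleftrightarrow> (\<forall>F Ft. prior F \<longrightarrow> prior Ft \<longrightarrow> success_prob n A Ft F \<ge> \<beta>)"

definition cdfP :: "real measure \<Rightarrow> nat \<Rightarrow> real" where
  "cdfP Ft l = measure Ft {..real l}"

definition pmfP :: "real measure \<Rightarrow> nat \<Rightarrow> real" where
  "pmfP Ft l = measure Ft {real l}"

definition Delta :: "real measure \<Rightarrow> nat \<Rightarrow> nat \<Rightarrow> real" where
  "Delta Ft t l = (if t = 0 then (if l = 1 then 1 else 0)
                   else cdfP Ft l ^ t - cdfP Ft (l - 1) ^ t)"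

end

theory Submission
  imports Defs
begin

lemma integral_PiM_finite:
  fixes F :: "real measure" and R :: "real set" and g :: "(nat \<Rightarrow> real) \<Rightarrow> real"
  assumes ps: "prob_space F" and sF: "sets F = sets borel" and fin: "finite R"
    and R1: "measure F R = 1"
    and gm: "g \<in> borel_measurable (PiM {..<n} (\<lambda>_. borel))"
  shows "(\<integral>x. g x \<partial>PiM {..<n} (\<lambda>_. F)) = (\<Sum>x\<in>PiE {..<n} (\<lambda>_. R). g x * (\<Prod>i<n. measure F {x i}))"
proof -
  have sf: "sigma_finite_measure F" by (rule prob_space_imp_sigma_finite[OF ps])
  interpret pF: prob_space F by (rule ps)
  interpret pp: product_prob_space "\<lambda>_. F" "{..<n}" ..
  interpret fp: finite_product_prob_space "\<lambda>_. F" "{..<n}"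
    by (intro finite_product_prob_space.intro finite_product_sigma_finite.intro finite_product_sigma_finite_axioms.intro)
       (simp_all add: pp.product_sigma_finite_axioms pp.product_prob_space_axioms)
  let ?P = "PiM {..<n} (\<lambda>_. F)"
  let ?E = "PiE {..<n} (\<lambda>_. R)"
  have Rs: "R \<in> sets F" using fin sF by (simp add: finite_imp_closed)
  have sP: "sets ?P = sets (PiM {..<n} (\<lambda>_. borel))"
    by (rule sets_PiM_cong) (auto simp: sF)
  have gm': "g \<in> borel_measurable ?P" using gm measurable_cong_sets[OF sP refl] by blast
  have Es: "?E \<in> sets ?P" using Rs by (intro sets_PiM_I_finite) auto
  have "emeasure ?P ?E = (\<Prod>i<n. emeasure F R)"
    using Rs by (subst fp.measure_times) auto
  also have "\<dots> = 1" using R1 pF.emeasure_eq_measure by simp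
  finally have "emeasure ?P ?E = 1" .
  then have AE: "AE x in ?P. x \<in> ?E" using pp.P.AE_in_set_eq_1[OF Es] pp.P.emeasure_eq_measure by simp
  have "(\<integral>x. g x \<partial>?P) = (\<integral>x. g x * indicator ?E x \<partial>?P)"
    by (rule integral_cong_AE) (use gm' Es AE in auto)
  also have "\<dots> = (\<Sum>a\<in>?E. g a * measure ?P {a})"
  proof (rule integral_indicator_finite_real)
    show "finite ?E" using fin by (simp add: finite_PiE)
    fix a assume a: "a \<in> ?E"
    then have eq: "{a} = PiE {..<n} (\<lambda>i. {a i})"
      using a by (intro PiE_singleton[symmetric]) (simp add: PiE_iff)
    show "{a} \<in> sets ?P" unfolding eq using sF by (intro sets_PiM_I_finite) auto
    show "emeasure ?P {a} < \<infinity>" by (simp add: pp.P.emeasure_eq_measure)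
  qed
  also have "\<dots> = (\<Sum>a\<in>?E. g a * (\<Prod>i<n. measure F {a i}))"
  proof (rule sum.cong[OF refl])
    fix a assume a: "a \<in> ?E"
    then have eq: "{a} = PiE {..<n} (\<lambda>i. {a i})"
      using a by (intro PiE_singleton[symmetric]) (simp add: PiE_iff)
    have "emeasure ?P {a} = (\<Prod>i<n. emeasure F {a i})"
      unfolding eq using sF by (subst fp.measure_times) auto
    then have "measure ?P {a} = (\<Prod>i<n. measure F {a i})"
      by (simp add: pp.P.emeasure_eq_measure pF.emeasure_eq_measure prod_ennreal prod_nonneg)
    then show "g a * measure ?P {a} = g a * (\<Prod>i<n. measure F {a i})" by simp
  qed
  finally show ?thesis .
qed

lemma sum_PiE_Suc:
  assumes "finite V"
  shows "(\<Sum>x\<in>PiE {..<Suc m} (\<lambda>_. V). G x) = (\<Sum>x\<in>PiE {..<m} (\<lambda>_. V). \<Sum>v\<in>V. G (x(m:=v)))"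
proof -
  have e: "{..<Suc m} = insert m {..<m}" by auto
  have "(\<Sum>x\<in>PiE {..<Suc m} (\<lambda>_. V). G x) = (\<Sum>x\<in>(\<lambda>(y, g). g(m := y)) ` (V \<times> PiE {..<m} (\<lambda>_. V)). G x)"
    unfolding e PiE_insert_eq ..
  also have "\<dots> = (\<Sum>(v,x)\<in>V \<times> PiE {..<m} (\<lambda>_. V). G (x(m:=v)))"
    by (subst sum.reindex[OF inj_combinator]) (auto simp: case_prod_unfold)
  also have "\<dots> = (\<Sum>v\<in>V. \<Sum>x\<in>PiE {..<m} (\<lambda>_. V). G (x(m:=v)))"
    by (rule sum.cartesian_product[symmetric])
  also have "\<dots> = (\<Sum>x\<in>PiE {..<m} (\<lambda>_. V). \<Sum>v\<in>V. G (x(m:=v)))"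
    by (rule sum.swap)
  finally show ?thesis .
qed

definition na :: "(nat \<Rightarrow> (nat \<Rightarrow> real) \<Rightarrow> real) \<Rightarrow> bool" where
  "na a \<longleftrightarrow> (\<forall>t x x'. (\<forall>i\<le>t. x i = x' i) \<longrightarrow> a t x = a t x')"

definition bb :: "(nat \<Rightarrow> (nat \<Rightarrow> real) \<Rightarrow> real) \<Rightarrow> nat \<Rightarrow> (nat \<Rightarrow> real) \<Rightarrow> real" where
  "bb a s x = (if (\<forall>i<s. x i \<le> x s) then a s x else 0)"

definition SS :: "(nat \<Rightarrow> (nat \<Rightarrow> real) \<Rightarrow> real) \<Rightarrow> nat \<Rightarrow> (nat \<Rightarrow> real) \<Rightarrow> real" where
  "SS a t x = (\<Prod>s<t. 1 - bb a s x)"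

definition ww :: "(real \<Rightarrow> real) \<Rightarrow> nat \<Rightarrow> (nat \<Rightarrow> real) \<Rightarrow> real" where
  "ww p t x = (\<Prod>i<t. p (x i))"

definition MM :: "nat \<Rightarrow> (nat \<Rightarrow> real) \<Rightarrow> real" where
  "MM t x = Max (insert 1 (x ` {..<t}))"

definition ind :: "bool \<Rightarrow> real" where "ind b = (if b then 1 else 0)"

definition QQ :: "real set \<Rightarrow> (real \<Rightarrow> real) \<Rightarrow> (nat \<Rightarrow> (nat \<Rightarrow> real) \<Rightarrow> real) \<Rightarrow> nat \<Rightarrow> real \<Rightarrow> real" where
  "QQ V p a t c = (\<Sum>x\<in>PiE {..<t} (\<lambda>_. V). ww p t x * SS a t x * ind (MM t x = c))"

definition RR :: "real set \<Rightarrow> (real \<Rightarrow> real) \<Rightarrow> (nat \<Rightarrow> (nat \<Rightarrow> real) \<Rightarrow> real) \<Rightarrow> nat \<Rightarrow> real \<Rightarrow> real" where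
  "RR V p a t c = (\<Sum>x\<in>PiE {..<t} (\<lambda>_. V). ww p t x * SS a (t-1) x * bb a (t-1) x * ind (x (t-1) = c))"

lemma bb_upd: "na a \<Longrightarrow> s < m \<Longrightarrow> bb a s (x(m:=v)) = bb a s x"
proof -
  assume na: "na a" and sm: "s < m"
  have "a s (x(m:=v)) = a s x" using na sm unfolding na_def by (metis fun_upd_other leD le_less_trans)
  then show ?thesis using sm unfolding bb_def by auto
qed

lemma SS_upd: "na a \<Longrightarrow> t \<le> m \<Longrightarrow> SS a t (x(m:=v)) = SS a t x"
  unfolding SS_def by (intro prod.cong refl) (simp add: bb_upd)

lemma SS_Suc: "SS a (Suc t) x = SS a t x * (1 - bb a t x)"
  unfolding SS_def by simp

lemma ww_Suc_upd: "ww p (Suc m) (x(m:=v)) = ww p m x * p v"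
proof -
  have "(\<Prod>i<m. p ((x(m:=v)) i)) = (\<Prod>i<m. p (x i))" by (intro prod.cong) auto
  then show ?thesis unfolding ww_def by simp
qed

lemma MM_Suc_upd: "MM (Suc m) (x(m:=v)) = max (MM m x) v"
proof -
  have "(x(m:=v)) ` {..<Suc m} = insert v (x ` {..<m})"
    by (auto simp: lessThan_Suc image_iff)
  moreover have "Max (insert 1 (insert v (x ` {..<m}))) = max v (Max (insert 1 (x ` {..<m})))"
    by (subst insert_commute) (rule Max_insert, auto)
  ultimately show ?thesis unfolding MM_def by (simp add: max.commute)
qed

lemma MM_le_iff: "MM t x \<le> c \<longleftrightarrow> 1 \<le> c \<and> (\<forall>i<t. x i \<le> c)"
  unfolding MM_def by (subst Max_le_iff) auto

lemma MM_ge1: "1 \<le> MM t x"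
  unfolding MM_def by (rule Max_ge) auto

lemma MM_in: "MM t x \<in> insert 1 (x ` {..<t})"
  unfolding MM_def by (rule Max_in) auto

lemma bb_nz: "bb a u x \<noteq> 0 \<Longrightarrow> \<forall>i<u. x i \<le> x u"
  unfolding bb_def by (auto split: if_splits)

lemma QQ_Suc:
  assumes fin: "finite V" and V1: "\<forall>v\<in>V. 1 \<le> v" and na: "na a"
  shows "QQ V p a (Suc u) c = (\<Sum>x\<in>PiE {..<u} (\<lambda>_. V). ww p u x * SS a u x *
            (\<Sum>v\<in>V. p v * ind (max (MM u x) v = c))) - RR V p a (Suc u) c"
proof -
  have "QQ V p a (Suc u) c = (\<Sum>x\<in>PiE {..<u} (\<lambda>_. V). \<Sum>v\<in>V.
      ww p u x * SS a u x * p v * ind (max (MM u x) v = c)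
      - ww p u x * p v * SS a u x * bb a u (x(u:=v)) * ind (v = c))"
    unfolding QQ_def
  proof (subst sum_PiE_Suc[OF fin], intro sum.cong refl)
    fix x v assume x: "x \<in> PiE {..<u} (\<lambda>_. V)" and v: "v \<in> V"
    have "bb a u (x(u:=v)) \<noteq> 0 \<Longrightarrow> max (MM u x) v = v"
    proof -
      assume "bb a u (x(u:=v)) \<noteq> 0"
      from bb_nz[OF this] have "\<forall>i<u. x i \<le> v" by simp
      then have "MM u x \<le> v" using V1 v by (simp add: MM_le_iff)
      then show ?thesis by simp
    qed
    then show "ww p (Suc u) (x(u := v)) * SS a (Suc u) (x(u := v)) * ind (MM (Suc u) (x(u := v)) = c) =
         ww p u x * SS a u x * p v * ind (max (MM u x) v = c) - ww p u x * p v * SS a u x * bb a u (x(u := v)) * ind (v = c)"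
      by (cases "bb a u (x(u:=v)) = 0")
         (auto simp: ww_Suc_upd SS_Suc SS_upd[OF na] MM_Suc_upd algebra_simps ind_def)
  qed
  also have "\<dots> = (\<Sum>x\<in>PiE {..<u} (\<lambda>_. V). ww p u x * SS a u x *
            (\<Sum>v\<in>V. p v * ind (max (MM u x) v = c))) - RR V p a (Suc u) c"
    unfolding RR_def
    by (subst sum_PiE_Suc[OF fin])
       (simp add: sum_subtractf sum_distrib_left ww_Suc_upd SS_upd[OF na] algebra_simps)
  finally show ?thesis .
qed

definition ab :: "(nat \<Rightarrow> (nat \<Rightarrow> real) \<Rightarrow> real) \<Rightarrow> bool" where
  "ab a \<longleftrightarrow> (\<forall>t x. 0 \<le> a t x \<and> a t x \<le> 1)"

lemma bb_ge0: "ab a \<Longrightarrow> 0 \<le> bb a s x" unfolding ab_def bb_def by auto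
lemma bb_le1: "ab a \<Longrightarrow> bb a s x \<le> 1" unfolding ab_def bb_def by auto
lemma SS_ge0: "ab a \<Longrightarrow> 0 \<le> SS a t x" unfolding SS_def
  by (intro prod_nonneg) (auto simp: bb_le1)
lemma SS_le1: "ab a \<Longrightarrow> SS a t x \<le> 1" unfolding SS_def
  by (intro prod_le_1) (auto simp: bb_le1 bb_ge0)
lemma ww_ge0: "(\<forall>v\<in>V. 0 \<le> p v) \<Longrightarrow> x \<in> PiE {..<t} (\<lambda>_. V) \<Longrightarrow> 0 \<le> ww p t x"
  unfolding ww_def by (intro prod_nonneg) (auto simp: PiE_iff)
lemma ind_ge0: "0 \<le> ind b" unfolding ind_def by auto
lemma ind_le1: "ind b \<le> 1" unfolding ind_def by auto

lemma QQ_Suc_raw: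
  assumes fin: "finite V" and na: "na a"
  shows "QQ V p a (Suc u) c = (\<Sum>x\<in>PiE {..<u} (\<lambda>_. V). \<Sum>v\<in>V.
      ww p u x * p v * SS a u x * (1 - bb a u (x(u:=v))) * ind (max (MM u x) v = c))"
  unfolding QQ_def
  by (subst sum_PiE_Suc[OF fin], intro sum.cong refl)
     (simp add: ww_Suc_upd SS_Suc SS_upd[OF na] MM_Suc_upd algebra_simps)

lemma QQ_Suc_ge:
  assumes fin: "finite V" and V1: "\<forall>v\<in>V. 1 \<le> v" and na: "na a" and ab: "ab a"
    and p0: "\<forall>v\<in>V. 0 \<le> p v"
  shows "QQ V p a (Suc u) c \<ge> QQ V p a u c * (\<Sum>v\<in>V. p v * ind (v < c))"
proof -
  have "QQ V p a u c * (\<Sum>v\<in>V. p v * ind (v < c)) = (\<Sum>x\<in>PiE {..<u} (\<lambda>_. V). \<Sum>v\<in>V.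
      ww p u x * p v * SS a u x * (ind (MM u x = c) * ind (v < c)))"
    unfolding QQ_def by (simp add: sum_distrib_left sum_distrib_right algebra_simps)
  also have "\<dots> \<le> (\<Sum>x\<in>PiE {..<u} (\<lambda>_. V). \<Sum>v\<in>V.
      ww p u x * p v * SS a u x * (1 - bb a u (x(u:=v))) * ind (max (MM u x) v = c))"
  proof (intro sum_mono)
    fix x v assume x: "x \<in> PiE {..<u} (\<lambda>_. V)" and v: "v \<in> V"
    have w: "0 \<le> ww p u x * p v * SS a u x"
      using ww_ge0[OF p0 x] p0 v SS_ge0[OF ab] by simp
    show "ww p u x * p v * SS a u x * (ind (MM u x = c) * ind (v < c))
        \<le> ww p u x * p v * SS a u x * (1 - bb a u (x(u:=v))) * ind (max (MM u x) v = c)"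
    proof (cases "MM u x = c \<and> v < c")
      case True
      have "bb a u (x(u:=v)) = 0"
      proof (rule ccontr)
        assume "bb a u (x(u:=v)) \<noteq> 0"
        from bb_nz[OF this] have "\<forall>i<u. x i \<le> v" by simp
        then have "MM u x \<le> v" using V1 v by (simp add: MM_le_iff)
        then show False using True by simp
      qed
      then show ?thesis using True by (simp add: ind_def)
    next
      case False
      then have "ind (MM u x = c) * ind (v < c) = 0" by (auto simp: ind_def)
      then have l: "ww p u x * p v * SS a u x * (ind (MM u x = c) * ind (v < c)) = 0" by simp
      have b1: "0 \<le> 1 - bb a u (x(u:=v))" using bb_le1[OF ab] by simp
      have r: "0 \<le> ww p u x * p v * SS a u x * (1 - bb a u (x(u:=v))) * ind (max (MM u x) v = c)"
        using mult_nonneg_nonneg[OF mult_nonneg_nonneg[OF w b1] ind_ge0] .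
      show ?thesis unfolding l by (rule r)
    qed
  qed
  also have "\<dots> = QQ V p a (Suc u) c" by (rule QQ_Suc_raw[OF fin na, symmetric])
  finally show ?thesis .
qed

lemma ind_max: "ind (max M v = c) = ind (M = c) * ind (v < c) + ind (M \<le> c) * ind (v = (c::real))"
  by (cases "M \<le> v"; cases "v < c"; cases "M = c"; cases "v = c") (auto simp: ind_def max_def)

lemma ind_max_p: "q * ind (max M v = c) = ind (M = c) * (q * ind (v < c)) + ind (M \<le> c) * (q * ind (v = (c::real)))"
  by (cases "M \<le> v"; cases "v < c"; cases "M = c"; cases "v = c") (auto simp: ind_def max_def)

lemma sum_max_split:
  fixes V :: "real set"
  assumes fin: "finite V"
  shows "(\<Sum>v\<in>V. p v * ind (max M v = c)) =
     ind (M = c) * (\<Sum>v\<in>V. p v * ind (v < c)) + ind (M \<le> c) * (if c \<in> V then p c else 0)"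
proof -
  have "(\<Sum>v\<in>V. p v * ind (max M v = c)) = (\<Sum>v\<in>V. ind (M = c) * (p v * ind (v < c)) + ind (M \<le> c) * (p v * ind (v = c)))"
    by (intro sum.cong refl) (rule ind_max_p)
  also have "\<dots> = ind (M = c) * (\<Sum>v\<in>V. p v * ind (v < c)) + ind (M \<le> c) * (\<Sum>v\<in>V. p v * ind (v = c))"
    by (simp add: sum.distrib sum_distrib_left)
  also have "(\<Sum>v\<in>V. p v * ind (v = c)) = (if c \<in> V then p c else 0)"
    using fin by (simp add: ind_def if_distrib[of "(*) _"] sum.delta' cong: if_cong)
  finally show ?thesis .
qed

lemma sum_all_le:
  assumes fin: "finite V"
  shows "(\<Sum>x\<in>PiE {..<t} (\<lambda>_. V). ww p t x * ind (\<forall>i<t. x i \<le> c)) = (\<Sum>v\<in>V. p v * ind (v \<le> c)) ^ t"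
proof (induction t)
  case 0
  then show ?case by (simp add: ww_def ind_def)
next
  case (Suc t)
  have "(\<Sum>x\<in>PiE {..<Suc t} (\<lambda>_. V). ww p (Suc t) x * ind (\<forall>i<Suc t. x i \<le> c))
     = (\<Sum>x\<in>PiE {..<t} (\<lambda>_. V). \<Sum>v\<in>V. (ww p t x * ind (\<forall>i<t. x i \<le> c)) * (p v * ind (v \<le> c)))"
  proof (subst sum_PiE_Suc[OF fin], intro sum.cong refl)
    fix x v
    have eq: "(\<forall>i<Suc t. (x(t:=v)) i \<le> c) \<longleftrightarrow> (\<forall>i<t. x i \<le> c) \<and> v \<le> c"
      by (auto simp: less_Suc_eq)
    show "ww p (Suc t) (x(t := v)) * ind (\<forall>i<Suc t. (x(t := v)) i \<le> c) =
         ww p t x * ind (\<forall>i<t. x i \<le> c) * (p v * ind (v \<le> c))"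
      unfolding ww_Suc_upd eq by (auto simp: ind_def)
  qed
  also have "\<dots> = (\<Sum>x\<in>PiE {..<t} (\<lambda>_. V). ww p t x * ind (\<forall>i<t. x i \<le> c)) * (\<Sum>v\<in>V. p v * ind (v \<le> c))"
    by (rule sum_product[symmetric])
  finally show ?case using Suc by simp
qed

lemma sum_future:
  assumes fin: "finite V" and Tm: "T \<le> m"
    and H: "\<And>x j v. T \<le> j \<Longrightarrow> H (x(j:=v)) = H x"
    and C: "\<And>x j v. T \<le> j \<Longrightarrow> C (x(j:=v)) = C x"
  shows "(\<Sum>x\<in>PiE {..<m} (\<lambda>_. V). ww p m x * H x * (\<Prod>j\<in>{T..<m}. ind (x j \<le> C x)))
       = (\<Sum>x\<in>PiE {..<T} (\<lambda>_. V). ww p T x * H x * (\<Sum>v\<in>V. p v * ind (v \<le> C x)) ^ (m - T))"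
  using Tm H
proof (induction m arbitrary: H rule: dec_induct)
  case base
  then show ?case by simp
next
  case (step m)
  let ?G = "\<lambda>x. (\<Sum>v\<in>V. p v * ind (v \<le> C x))"
  have "(\<Sum>x\<in>PiE {..<Suc m} (\<lambda>_. V). ww p (Suc m) x * H x * (\<Prod>j\<in>{T..<Suc m}. ind (x j \<le> C x)))
    = (\<Sum>x\<in>PiE {..<m} (\<lambda>_. V). \<Sum>v\<in>V. (ww p m x * H x * (\<Prod>j\<in>{T..<m}. ind (x j \<le> C x))) * (p v * ind (v \<le> C x)))"
  proof (subst sum_PiE_Suc[OF fin], intro sum.cong refl)
    fix x v
    have Cm: "C (x(m:=v)) = C x" using C step.hyps by blast
    have Hm: "H (x(m:=v)) = H x" using step.prems step.hyps by blast
    have "(\<Prod>j\<in>{T..<m}. ind ((x(m:=v)) j \<le> C (x(m:=v)))) = (\<Prod>j\<in>{T..<m}. ind (x j \<le> C x))"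
      using Cm by (intro prod.cong) auto
    then have "(\<Prod>j\<in>{T..<Suc m}. ind ((x(m:=v)) j \<le> C (x(m:=v)))) = (\<Prod>j\<in>{T..<m}. ind (x j \<le> C x)) * ind (v \<le> C x)"
      using step.hyps Cm by (simp add: prod.atLeastLessThan_Suc)
    then show "ww p (Suc m) (x(m := v)) * H (x(m := v)) * (\<Prod>j = T..<Suc m. ind ((x(m := v)) j \<le> C (x(m := v)))) =
         ww p m x * H x * prod (\<lambda>j. ind (x j \<le> C x)) {T..<m} * (p v * ind (v \<le> C x))"
      using Hm by (simp add: ww_Suc_upd algebra_simps)
  qed
  also have "\<dots> = (\<Sum>x\<in>PiE {..<m} (\<lambda>_. V). ww p m x * (H x * ?G x) * (\<Prod>j\<in>{T..<m}. ind (x j \<le> C x)))"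
    by (simp add: sum_distrib_left algebra_simps)
  also have "\<dots> = (\<Sum>x\<in>PiE {..<T} (\<lambda>_. V). ww p T x * (H x * ?G x) * ?G x ^ (m - T))"
  proof (rule step.IH)
    fix x j v assume j: "T \<le> j"
    have h1: "H (x(j:=v)) = H x" using step.prems j by blast
    have h2: "C (x(j:=v)) = C x" using C j by blast
    show "H (x(j:=v)) * ?G (x(j:=v)) = H x * ?G x" unfolding h1 h2 ..
  qed
  also have "\<dots> = (\<Sum>x\<in>PiE {..<T} (\<lambda>_. V). ww p T x * H x * ?G x ^ (Suc m - T))"
    using step.hyps by (intro sum.cong refl) (simp add: Suc_diff_le algebra_simps)
  finally show ?case .
qed

lemma prod_ind: "finite S \<Longrightarrow> (\<Prod>j\<in>S. ind (P j)) = ind (\<forall>j\<in>S. P j)"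
  by (induction S rule: finite_induct) (auto simp: ind_def)

lemma success_pw:
  assumes t: "t < n"
  shows "SS a t x * bb a t x * ind (\<forall>i<n. x i \<le> x t) = SS a t x * bb a t x * (\<Prod>j\<in>{Suc t..<n}. ind (x j \<le> x t))"
proof (cases "bb a t x = 0")
  case False
  from bb_nz[OF this] have h: "\<forall>i<t. x i \<le> x t" .
  have "(\<forall>i<n. x i \<le> x t) \<longleftrightarrow> (\<forall>j\<in>{Suc t..<n}. x j \<le> x t)"
  proof
    assume "\<forall>i<n. x i \<le> x t" then show "\<forall>j\<in>{Suc t..<n}. x j \<le> x t" by auto
  next
    assume R: "\<forall>j\<in>{Suc t..<n}. x j \<le> x t"
    show "\<forall>i<n. x i \<le> x t"
    proof (intro allI impI)
      fix i assume i: "i < n"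
      consider (a) "i < t" | (b) "i = t" | (c) "Suc t \<le> i" by linarith
      then show "x i \<le> x t" using h R i by cases auto
    qed
  qed
  then show ?thesis by (simp add: prod_ind)
qed simp

lemma success_formula:
  assumes fin: "finite V" and na: "na a"
  shows "(\<Sum>x\<in>PiE {..<n} (\<lambda>_. V). ww p n x * (\<Sum>t<n. SS a t x * bb a t x * ind (\<forall>i<n. x i \<le> x t)))
   = (\<Sum>t<n. \<Sum>x\<in>PiE {..<Suc t} (\<lambda>_. V). ww p (Suc t) x * (SS a t x * bb a t x) * (\<Sum>v\<in>V. p v * ind (v \<le> x t)) ^ (n - Suc t))"
proof -
  have "(\<Sum>x\<in>PiE {..<n} (\<lambda>_. V). ww p n x * (\<Sum>t<n. SS a t x * bb a t x * ind (\<forall>i<n. x i \<le> x t)))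
     = (\<Sum>x\<in>PiE {..<n} (\<lambda>_. V). \<Sum>t<n. ww p n x * (SS a t x * bb a t x * ind (\<forall>i<n. x i \<le> x t)))"
    by (simp add: sum_distrib_left)
  also have "\<dots> = (\<Sum>t<n. \<Sum>x\<in>PiE {..<n} (\<lambda>_. V). ww p n x * (SS a t x * bb a t x * ind (\<forall>i<n. x i \<le> x t)))"
    by (rule sum.swap)
  also have "\<dots> = (\<Sum>t<n. \<Sum>x\<in>PiE {..<n} (\<lambda>_. V). ww p n x * (SS a t x * bb a t x) * (\<Prod>j\<in>{Suc t..<n}. ind (x j \<le> x t)))"
  proof (rule sum.cong[OF refl], rule sum.cong[OF refl])
    fix t x assume "t \<in> {..<n}" "x \<in> PiE {..<n} (\<lambda>_. V)"
    then have tn: "t < n" by simp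
    show "ww p n x * (SS a t x * bb a t x * ind (\<forall>i<n. x i \<le> x t)) = ww p n x * (SS a t x * bb a t x) * (\<Prod>j\<in>{Suc t..<n}. ind (x j \<le> x t))"
      using success_pw[OF tn, of a x] by (metis mult.assoc)
  qed
  also have "\<dots> = (\<Sum>t<n. \<Sum>x\<in>PiE {..<Suc t} (\<lambda>_. V). ww p (Suc t) x * (SS a t x * bb a t x) * (\<Sum>v\<in>V. p v * ind (v \<le> x t)) ^ (n - Suc t))"
  proof (rule sum.cong[OF refl])
    fix t assume t: "t \<in> {..<n}"
    show "(\<Sum>x\<in>PiE {..<n} (\<lambda>_. V). ww p n x * (SS a t x * bb a t x) * (\<Prod>j\<in>{Suc t..<n}. ind (x j \<le> x t)))
      = (\<Sum>x\<in>PiE {..<Suc t} (\<lambda>_. V). ww p (Suc t) x * (SS a t x * bb a t x) * (\<Sum>v\<in>V. p v * ind (v \<le> x t)) ^ (n - Suc t))"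
      by (rule sum_future[OF fin]) (use t in \<open>auto simp: SS_upd[OF na] bb_upd[OF na]\<close>)
  qed
  finally show ?thesis .
qed

definition gi :: "nat \<Rightarrow> (nat \<Rightarrow> (nat \<Rightarrow> real) \<Rightarrow> real) \<Rightarrow> (nat \<Rightarrow> real) \<Rightarrow> real" where
  "gi n a x = (\<Sum>t<n. (\<Prod>s<t. 1 - a s x) * a t x * (if x t = Max (x ` {..<n}) then 1 else 0))"

lemma gi_le:
  assumes ab: "ab a"
  shows "gi n a x \<le> (\<Sum>t<n. SS a t x * bb a t x * ind (\<forall>i<n. x i \<le> x t))"
  unfolding gi_def
proof (rule sum_mono)
  fix t assume t: "t \<in> {..<n}"
  show "(\<Prod>s<t. 1 - a s x) * a t x * (if x t = Max (x ` {..<n}) then 1 else 0) \<le> SS a t x * bb a t x * ind (\<forall>i<n. x i \<le> x t)"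
  proof (cases "x t = Max (x ` {..<n})")
    case True
    then have all: "\<forall>i<n. x i \<le> x t" by (metis Max_ge finite_imageI finite_lessThan image_eqI lessThan_iff)
    then have b: "bb a t x = a t x" using t unfolding bb_def by auto
    have "(\<Prod>s<t. 1 - a s x) \<le> SS a t x" unfolding SS_def
      by (intro prod_mono) (use ab in \<open>auto simp: ab_def bb_def\<close>)
    then show ?thesis using True all b ab by (simp add: ind_def ab_def mult_right_mono)
  next
    case False
    then show ?thesis using SS_ge0[OF ab] bb_ge0[OF ab] ind_ge0 by simp
  qed
qed

lemma if_max_meas: "(t::nat) < n \<Longrightarrow> (\<lambda>x::nat\<Rightarrow>real. if x t = Max (x ` {..<n}) then 1 else 0::real) \<in> borel_measurable (PiM {..<n} (\<lambda>_. borel))"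
  by measurable

lemma gi_meas:
  assumes "\<And>t. a t \<in> borel_measurable (PiM {..<n} (\<lambda>_. borel))"
  shows "gi n a \<in> borel_measurable (PiM {..<n} (\<lambda>_. borel))"
  unfolding gi_def
  by (intro borel_measurable_sum borel_measurable_times borel_measurable_prod borel_measurable_diff
      borel_measurable_const assms if_max_meas) auto

locale setting =
  fixes Ft :: "real measure" and K :: nat
  assumes ps: "prob_space Ft" and sF: "sets Ft = sets borel"
    and supp: "measure Ft (real ` {1..K}) = 1"
begin

abbreviation "V \<equiv> real ` {1..K}"

definition p :: "real \<Rightarrow> real" where "p v = measure Ft {v}"

lemma finV: "finite V" by simp

lemma K1: "1 \<le> K"
proof (rule ccontr)
  assume "\<not> 1 \<le> K"
  then have "{1..K} = {}" by auto
  then show False using supp by simp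
qed

lemma V1: "\<forall>v\<in>V. 1 \<le> v" by auto
lemma oneV: "1 \<in> V" using K1 by force
lemma p0: "0 \<le> p v" unfolding p_def by simp
lemma p0V: "\<forall>v\<in>V. 0 \<le> p v" using p0 by simp

lemma sets_fin: "finite B \<Longrightarrow> B \<in> sets Ft"
  using sF by (simp add: finite_imp_closed)

lemma meas_restrict:
  assumes B: "B \<in> sets Ft"
  shows "measure Ft B = measure Ft (B \<inter> V)"
proof -
  interpret prob_space Ft by (rule ps)
  have Vs: "V \<in> sets Ft" by (rule sets_fin) simp
  have "measure Ft B = measure Ft (B \<inter> V) + measure Ft (B - V)"
    using B Vs by (subst finite_measure_Union[symmetric]) (auto intro!: arg_cong[where f="measure Ft"])
  moreover have "measure Ft (B - V) \<le> measure Ft (space Ft - V)"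
    using B Vs sets.sets_into_space[OF B] by (intro finite_measure_mono) auto
  moreover have "measure Ft (space Ft - V) = 0" using prob_compl[OF Vs] supp by simp
  ultimately show ?thesis using measure_nonneg[of Ft "B - V"] by linarith
qed

lemma cdf_eq: "cdfP Ft l = (\<Sum>v\<in>V. p v * ind (v \<le> real l))"
proof -
  interpret prob_space Ft by (rule ps)
  have "cdfP Ft l = measure Ft ({..real l} \<inter> V)"
    unfolding cdfP_def using sF by (intro meas_restrict) auto
  also have "{..real l} \<inter> V = {v\<in>V. v \<le> real l}" by auto
  also have "measure Ft {v\<in>V. v \<le> real l} = (\<Sum>v\<in>{v\<in>V. v \<le> real l}. measure Ft {v})"
    by (rule finite_measure_eq_sum_singleton) (auto intro: sets_fin)
  also have "\<dots> = (\<Sum>v\<in>V. p v * ind (v \<le> real l))"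
    by (subst sum.inter_filter) (auto simp: p_def ind_def intro!: sum.cong)
  finally show ?thesis .
qed

lemma cdf_lt: "1 \<le> l \<Longrightarrow> (\<Sum>v\<in>V. p v * ind (v < real l)) = cdfP Ft (l - 1)"
  unfolding cdf_eq by (intro sum.cong refl) (auto simp: ind_def)

lemma pmf_eq: "pmfP Ft l = p (real l)" unfolding pmfP_def p_def ..

lemma MM_V: "x \<in> PiE {..<t} (\<lambda>_. V) \<Longrightarrow> MM t x \<in> V"
  using MM_in[of t x] oneV by (auto simp: PiE_iff)

lemma MM_nat: "x \<in> PiE {..<t} (\<lambda>_. V) \<Longrightarrow> \<exists>j\<in>{1..K}. MM t x = real j"
proof -
  assume x: "x \<in> PiE {..<t} (\<lambda>_. V)"
  show ?thesis using MM_V[OF x] by (simp add: image_iff)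
qed

definition DD :: "nat \<Rightarrow> nat \<Rightarrow> real" where
  "DD t l = (\<Sum>x\<in>PiE {..<t} (\<lambda>_. V). ww p t x * ind (MM t x = real l))"

lemma ind_nat_eq: "1 \<le> (j::nat) \<Longrightarrow> 1 \<le> l \<Longrightarrow> ind (real j = real l) = ind (real j \<le> real l) - ind (real j \<le> real (l - 1))"
  by (auto simp: ind_def)

lemma Delta_DD:
  assumes l: "l \<in> {1..K}"
  shows "Delta Ft t l = DD t l"
proof (cases "t = 0")
  case True
  then show ?thesis by (simp add: Delta_def DD_def ww_def MM_def ind_def PiE_empty_domain)
next
  case False
  have pw: "ind (MM t x = real l) = ind (\<forall>i<t. x i \<le> real l) - ind (\<forall>i<t. x i \<le> real (l - 1))"
    if x: "x \<in> PiE {..<t} (\<lambda>_. V)" for x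
  proof -
    obtain j where j: "j \<in> {1..K}" "MM t x = real j" using MM_nat[OF x] by blast
    have "x 0 \<in> V" using x False by (auto simp: PiE_iff)
    then have x0: "1 \<le> x 0" by auto
    have eqc: "(\<forall>i<t. x i \<le> c) \<longleftrightarrow> MM t x \<le> c" for c
      using x0 False by (auto simp: MM_le_iff)
    show ?thesis unfolding eqc j(2) using j l by (intro ind_nat_eq) auto
  qed
  have "DD t l = (\<Sum>x\<in>PiE {..<t} (\<lambda>_. V). ww p t x * ind (\<forall>i<t. x i \<le> real l) - ww p t x * ind (\<forall>i<t. x i \<le> real (l - 1)))"
    unfolding DD_def by (intro sum.cong refl) (simp add: pw right_diff_distrib)
  also have "\<dots> = cdfP Ft l ^ t - cdfP Ft (l - 1) ^ t"
    by (simp only: sum_subtractf sum_all_le[OF finV] cdf_eq)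
  finally show ?thesis using False by (simp add: Delta_def)
qed

lemma QQ_ge0: "ab a \<Longrightarrow> 0 \<le> QQ V p a t c"
  unfolding QQ_def
  by (intro sum_nonneg mult_nonneg_nonneg ww_ge0[OF p0V] SS_ge0 ind_ge0) auto

lemma QQ_le_DD: "ab a \<Longrightarrow> QQ V p a t (real l) \<le> DD t l"
  unfolding QQ_def DD_def
proof (rule sum_mono)
  fix x assume ab: "ab a" and x: "x \<in> PiE {..<t} (\<lambda>_. V)"
  have "ww p t x * SS a t x * ind (MM t x = real l) \<le> ww p t x * 1 * ind (MM t x = real l)"
    using ww_ge0[OF p0V x] SS_le1[OF ab] ind_ge0 by (intro mult_right_mono mult_left_mono) auto
  then show "ww p t x * SS a t x * ind (MM t x = real l) \<le> ww p t x * ind (MM t x = real l)" by simp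
qed

lemma RR_ge0: "ab a \<Longrightarrow> 0 \<le> RR V p a t c"
  unfolding RR_def
  by (intro sum_nonneg mult_nonneg_nonneg ww_ge0[OF p0V] SS_ge0 bb_ge0 ind_ge0) auto

lemma QQ_0: "QQ V p a 0 (real l) = ind (l = 1)"
  by (simp add: QQ_def ww_def SS_def MM_def ind_def PiE_empty_domain)

lemma sum_le_Q:
  assumes x: "x \<in> PiE {..<u} (\<lambda>_. V)" and l: "l \<le> K"
  shows "ind (MM u x \<le> real l) = (\<Sum>m\<in>{1..l}. ind (MM u x = real m))"
proof -
  obtain j where j: "j \<in> {1..K}" "MM u x = real j" using MM_nat[OF x] by blast
  have "(\<Sum>m\<in>{1..l}. ind (real j = real m)) = (\<Sum>m\<in>{1..l}. if j = m then 1 else 0)"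
    by (intro sum.cong refl) (auto simp: ind_def)
  also have "\<dots> = (if j \<in> {1..l} then 1 else 0)" by simp
  finally show ?thesis using j by (auto simp: ind_def)
qed

lemma QQ_rec:
  assumes na: "na a" and l: "l \<in> {1..K}"
  shows "QQ V p a (Suc u) (real l) = QQ V p a u (real l) * cdfP Ft (l - 1)
      + pmfP Ft l * (\<Sum>m\<in>{1..l}. QQ V p a u (real m)) - RR V p a (Suc u) (real l)"
proof -
  have lV: "real l \<in> V" using l by auto
  have "(\<Sum>x\<in>PiE {..<u} (\<lambda>_. V). ww p u x * SS a u x * (\<Sum>v\<in>V. p v * ind (max (MM u x) v = real l)))
     = (\<Sum>x\<in>PiE {..<u} (\<lambda>_. V). (ww p u x * SS a u x * ind (MM u x = real l)) * cdfP Ft (l - 1)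
          + pmfP Ft l * (\<Sum>m\<in>{1..l}. ww p u x * SS a u x * ind (MM u x = real m)))"
  proof (intro sum.cong refl)
    fix x assume x: "x \<in> PiE {..<u} (\<lambda>_. V)"
    have "(\<Sum>v\<in>V. p v * ind (max (MM u x) v = real l)) = ind (MM u x = real l) * (\<Sum>v\<in>V. p v * ind (v < real l)) + ind (MM u x \<le> real l) * (if real l \<in> V then p (real l) else 0)"
      by (rule sum_max_split[OF finV])
    also have "\<dots> = ind (MM u x = real l) * cdfP Ft (l - 1) + ind (MM u x \<le> real l) * pmfP Ft l"
      using lV l cdf_lt[of l] by (simp add: pmf_eq)
    also have "\<dots> = ind (MM u x = real l) * cdfP Ft (l - 1) + (\<Sum>m\<in>{1..l}. ind (MM u x = real m)) * pmfP Ft l"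
      using sum_le_Q[OF x] l by simp
    finally show "ww p u x * SS a u x * (\<Sum>v\<in>V. p v * ind (max (MM u x) v = real l)) =
      (ww p u x * SS a u x * ind (MM u x = real l)) * cdfP Ft (l - 1)
          + pmfP Ft l * (\<Sum>m\<in>{1..l}. ww p u x * SS a u x * ind (MM u x = real m))"
      by (simp add: algebra_simps sum_distrib_left sum_distrib_right)
  qed
  also have "\<dots> = QQ V p a u (real l) * cdfP Ft (l - 1) + pmfP Ft l * (\<Sum>m\<in>{1..l}. QQ V p a u (real m))"
    unfolding QQ_def by (simp add: sum.distrib sum_distrib_left sum_distrib_right, rule sum.swap)
  finally have T: "(\<Sum>x\<in>PiE {..<u} (\<lambda>_. V). ww p u x * SS a u x * (\<Sum>v\<in>V. p v * ind (max (MM u x) v = real l)))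
     = QQ V p a u (real l) * cdfP Ft (l - 1) + pmfP Ft l * (\<Sum>m\<in>{1..l}. QQ V p a u (real m))" .
  show ?thesis by (simp only: QQ_Suc[OF finV V1 na] T)
qed

end

context setting
begin

lemma sum_ind_pick:
  assumes "finite S"
  shows "(\<Sum>l\<in>S. ind (real j = real l) * f l) = (if j \<in> S then f j else 0)"
proof -
  have "(\<Sum>l\<in>S. ind (real j = real l) * f l) = (\<Sum>l\<in>S. if j = l then f l else 0)"
    by (intro sum.cong refl) (auto simp: ind_def)
  also have "\<dots> = (if j \<in> S then f j else 0)" using assms by (simp add: sum.delta)
  finally show ?thesis .
qed

lemma success_generic:
  fixes F :: "real measure" and q :: "real \<Rightarrow> real" and A
  assumes psF: "prob_space F" and sFF: "sets F = sets borel" and FV: "measure F V = 1"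
    and q: "\<And>v. measure F {v} = q v"
    and ab: "ab (A Ft)" and na: "na (A Ft)"
    and me: "\<And>t. A Ft t \<in> borel_measurable (PiM {..<n} (\<lambda>_. borel))"
  shows "success_prob n A Ft F \<le> (\<Sum>t<n. \<Sum>x\<in>PiE {..<Suc t} (\<lambda>_. V). ww q (Suc t) x * (SS (A Ft) t x * bb (A Ft) t x) * (\<Sum>v\<in>V. q v * ind (v \<le> x t)) ^ (n - Suc t))"
proof -
  let ?a = "A Ft"
  have q0: "\<forall>v\<in>V. 0 \<le> q v" using q by (metis measure_nonneg)
  have "success_prob n A Ft F = (\<integral>x. gi n ?a x \<partial>PiM {..<n} (\<lambda>_. F))"
    unfolding success_prob_def gi_def ..
  also have "\<dots> = (\<Sum>x\<in>PiE {..<n} (\<lambda>_. V). gi n ?a x * (\<Prod>i<n. measure F {x i}))"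
    by (rule integral_PiM_finite[OF psF sFF finV FV gi_meas[OF me]])
  also have "\<dots> = (\<Sum>x\<in>PiE {..<n} (\<lambda>_. V). ww q n x * gi n ?a x)"
    by (simp add: q ww_def mult.commute)
  also have "\<dots> \<le> (\<Sum>x\<in>PiE {..<n} (\<lambda>_. V). ww q n x * (\<Sum>t<n. SS ?a t x * bb ?a t x * ind (\<forall>i<n. x i \<le> x t)))"
    by (intro sum_mono mult_left_mono gi_le[OF ab] ww_ge0[OF q0]) auto
  also have "\<dots> = (\<Sum>t<n. \<Sum>x\<in>PiE {..<Suc t} (\<lambda>_. V). ww q (Suc t) x * (SS ?a t x * bb ?a t x) * (\<Sum>v\<in>V. q v * ind (v \<le> x t)) ^ (n - Suc t))"
    by (rule success_formula[OF finV na])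
  finally show ?thesis .
qed

lemma shift1: "(\<Sum>t\<in>{1..n}. f t) = (\<Sum>t<n. f (Suc t))"
  by (simp add: sum.atLeast1_atMost_eq)

lemma RR_Suc: "RR V p a (Suc t) c = (\<Sum>x\<in>PiE {..<Suc t} (\<lambda>_. V). ww p (Suc t) x * (SS a t x * bb a t x) * ind (x t = c))"
  unfolding RR_def by (simp add: mult.assoc)

lemma objective_Ft:
  "(\<Sum>t<n. \<Sum>x\<in>PiE {..<Suc t} (\<lambda>_. V). ww p (Suc t) x * (SS a t x * bb a t x) * (\<Sum>v\<in>V. p v * ind (v \<le> x t)) ^ (n - Suc t))
   = (\<Sum>t\<in>{1..n}. \<Sum>l\<in>{1..K}. cdfP Ft l ^ (n - t) * RR V p a t (real l))"
  unfolding shift1[where n=n]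
proof (rule sum.cong[OF refl])
  fix t
  have "(\<Sum>l\<in>{1..K}. cdfP Ft l ^ (n - Suc t) * RR V p a (Suc t) (real l))
    = (\<Sum>x\<in>PiE {..<Suc t} (\<lambda>_. V). ww p (Suc t) x * (SS a t x * bb a t x) * (\<Sum>l\<in>{1..K}. ind (x t = real l) * cdfP Ft l ^ (n - Suc t)))"
    unfolding RR_Suc sum_distrib_left by (subst sum.swap) (simp add: algebra_simps)
  also have "\<dots> = (\<Sum>x\<in>PiE {..<Suc t} (\<lambda>_. V). ww p (Suc t) x * (SS a t x * bb a t x) * (\<Sum>v\<in>V. p v * ind (v \<le> x t)) ^ (n - Suc t))"
  proof (intro sum.cong refl)
    fix x assume x: "x \<in> PiE {..<Suc t} (\<lambda>_. V)"
    then have "x t \<in> V" by (auto simp: PiE_iff)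
    then obtain j where j: "j \<in> {1..K}" "x t = real j" by blast
    show "ww p (Suc t) x * (SS a t x * bb a t x) * (\<Sum>l\<in>{1..K}. ind (x t = real l) * cdfP Ft l ^ (n - Suc t)) =
          ww p (Suc t) x * (SS a t x * bb a t x) * (\<Sum>v\<in>V. p v * ind (v \<le> x t)) ^ (n - Suc t)"
      unfolding j(2) using j(1) by (simp only: sum_ind_pick[OF finite_atLeastAtMost]) (simp add: cdf_eq)
  qed
  finally show "(\<Sum>x\<in>PiE {..<Suc t} (\<lambda>_. V). ww p (Suc t) x * (SS a t x * bb a t x) * (\<Sum>v\<in>V. p v * ind (v \<le> x t)) ^ (n - Suc t))
    = (\<Sum>l\<in>{1..K}. cdfP Ft l ^ (n - Suc t) * RR V p a (Suc t) (real l))" by simp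
qed

end

context setting
begin

definition Fk :: "nat \<Rightarrow> real measure" where
  "Fk k = density Ft (\<lambda>x. ennreal (indicator {..real k} x / cdfP Ft k))"

definition qk :: "nat \<Rightarrow> real \<Rightarrow> real" where
  "qk k v = p v * ind (v \<le> real k) / cdfP Ft k"

lemma cdf_nonneg: "0 \<le> cdfP Ft k" unfolding cdfP_def by simp

lemma ck_pos:
  assumes f1: "pmfP Ft 1 > 0" and k: "k \<in> {1..K}"
  shows "0 < cdfP Ft k"
proof -
  have "p 1 * ind (1 \<le> real k) \<le> (\<Sum>v\<in>V. p v * ind (v \<le> real k))"
    by (rule member_le_sum[OF oneV]) (auto intro: mult_nonneg_nonneg p0 ind_ge0)
  moreover have "p 1 * ind (1 \<le> real k) = pmfP Ft 1" using k by (simp add: pmf_eq ind_def)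
  ultimately show ?thesis using f1 cdf_eq[of k] by simp
qed

lemma fk_meas: "(\<lambda>x. ennreal (indicator {..real k} x / cdfP Ft k)) \<in> borel_measurable Ft"
proof -
  have "(\<lambda>x. ennreal (indicator {..real k} x / cdfP Ft k)) \<in> borel_measurable borel" by measurable
  then show ?thesis using measurable_cong_sets[OF sF refl] by blast
qed

lemma Fk_emeas:
  assumes B: "B \<in> sets borel"
  shows "emeasure (Fk k) B = ennreal (measure Ft (B \<inter> {..real k}) / cdfP Ft k)"
proof -
  interpret prob_space Ft by (rule ps)
  have Bs: "B \<in> sets Ft" using B sF by simp
  have Bk: "B \<inter> {..real k} \<in> sets Ft" using B sF by simp
  have "emeasure (Fk k) B = (\<integral>\<^sup>+x. ennreal (indicator {..real k} x / cdfP Ft k) * indicator B x \<partial>Ft)"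
    unfolding Fk_def by (rule emeasure_density[OF fk_meas Bs])
  also have "\<dots> = (\<integral>\<^sup>+x. ennreal (1 / cdfP Ft k) * indicator (B \<inter> {..real k}) x \<partial>Ft)"
    by (intro nn_integral_cong) (auto split: split_indicator)
  also have "\<dots> = ennreal (1 / cdfP Ft k) * emeasure Ft (B \<inter> {..real k})"
    by (rule nn_integral_cmult_indicator[OF Bk])
  also have "\<dots> = ennreal (measure Ft (B \<inter> {..real k}) / cdfP Ft k)"
    using cdf_nonneg[of k] by (simp add: emeasure_eq_measure ennreal_mult''[symmetric])
  finally show ?thesis .
qed

lemma Fk_measure:
  assumes B: "B \<in> sets borel"
  shows "measure (Fk k) B = measure Ft (B \<inter> {..real k}) / cdfP Ft k"
proof -
  have "measure (Fk k) B = enn2real (emeasure (Fk k) B)" by (rule measure_def)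
  also have "\<dots> = measure Ft (B \<inter> {..real k}) / cdfP Ft k"
    unfolding Fk_emeas[OF B] by (rule enn2real_ennreal) (simp add: cdf_nonneg)
  finally show ?thesis .
qed

lemma sets_Fk: "sets (Fk k) = sets borel" unfolding Fk_def using sF by simp

lemma prior_Fk:
  assumes pr: "prior Ft" and ck: "0 < cdfP Ft k"
  shows "prior (Fk k)"
  unfolding prior_def
proof (intro conjI)
  have sp: "space (Fk k) = UNIV" using sets_eq_imp_space_eq[OF sets_Fk[of k]] by simp
  show "prob_space (Fk k)"
  proof (rule prob_spaceI)
    have "emeasure (Fk k) (space (Fk k)) = ennreal (measure Ft (UNIV \<inter> {..real k}) / cdfP Ft k)"
      unfolding sp by (rule Fk_emeas) simp
    also have "\<dots> = 1" using ck by (simp add: cdfP_def)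
    finally show "emeasure (Fk k) (space (Fk k)) = 1" .
  qed
  show "sets (Fk k) = sets borel" by (rule sets_Fk)
  have "AE x in Ft. 0 \<le> x" using pr by (simp add: prior_def)
  then show "AE x in Fk k. 0 \<le> x"
    unfolding Fk_def by (subst AE_density[OF fk_meas]) (auto elim: AE_mp)
qed

lemma Fk_V: assumes ck: "0 < cdfP Ft k" shows "measure (Fk k) V = 1"
proof -
  have "measure (Fk k) V = measure Ft (V \<inter> {..real k}) / cdfP Ft k"
    by (rule Fk_measure) (simp add: finite_imp_closed)
  also have "measure Ft (V \<inter> {..real k}) = cdfP Ft k"
    unfolding cdfP_def using sF by (subst meas_restrict[of "{..real k}"]) (auto simp: Int_commute)
  finally show ?thesis using ck by simp
qed

lemma Fk_single: "measure (Fk k) {v} = qk k v"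
proof -
  have "measure (Fk k) {v} = measure Ft ({v} \<inter> {..real k}) / cdfP Ft k"
    by (rule Fk_measure) simp
  then show ?thesis unfolding qk_def p_def by (cases "v \<le> real k") (auto simp: ind_def)
qed

lemma pw_k:
  assumes x: "x \<in> PiE {..<Suc t} (\<lambda>_. V)" and j: "x t = real j" "j \<in> {1..K}" and t: "t < n"
    and ck: "0 < cdfP Ft k"
  shows "ww (qk k) (Suc t) x * (SS a t x * bb a t x) * (\<Sum>v\<in>V. qk k v * ind (v \<le> x t)) ^ (n - Suc t)
    = ww p (Suc t) x * (SS a t x * bb a t x) * (if j \<in> {1..k} then cdfP Ft j ^ (n - Suc t) / cdfP Ft k ^ n else 0)"
proof (cases "bb a t x = 0")
  case False
  from bb_nz[OF False] have h: "\<forall>i<t. x i \<le> x t" .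
  show ?thesis
  proof (cases "j \<le> k")
    case True
    have allk: "\<forall>i<Suc t. x i \<le> real k" using h j True by (auto simp: less_Suc_eq)
    have w: "ww (qk k) (Suc t) x = ww p (Suc t) x / cdfP Ft k ^ Suc t"
    proof -
      have "ww (qk k) (Suc t) x = (\<Prod>i<Suc t. p (x i) / cdfP Ft k)"
        unfolding ww_def qk_def using allk by (intro prod.cong refl) (auto simp: ind_def)
      also have "\<dots> = ww p (Suc t) x / cdfP Ft k ^ Suc t"
        unfolding ww_def by (simp add: prod_dividef)
      finally show ?thesis .
    qed
    have g: "(\<Sum>v\<in>V. qk k v * ind (v \<le> x t)) = cdfP Ft j / cdfP Ft k"
    proof -
      have "(\<Sum>v\<in>V. qk k v * ind (v \<le> x t)) = (\<Sum>v\<in>V. p v * ind (v \<le> x t) / cdfP Ft k)"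
        unfolding qk_def using j True by (intro sum.cong refl) (auto simp: ind_def)
      also have "\<dots> = cdfP Ft j / cdfP Ft k"
        unfolding cdf_eq j(1) by (simp add: sum_divide_distrib)
      finally show ?thesis .
    qed
    have e: "Suc t + (n - Suc t) = n" using t by simp
    have "cdfP Ft k ^ Suc t * cdfP Ft k ^ (n - Suc t) = cdfP Ft k ^ n"
      by (subst power_add[symmetric]) (simp only: e)
    then show ?thesis unfolding w g using True j ck
      by (simp add: power_divide field_simps)
  next
    case False
    have "qk k (x t) = 0" using False j unfolding qk_def by (auto simp: ind_def)
    then have "ww (qk k) (Suc t) x = 0" unfolding ww_def by simp
    then show ?thesis using False by simp
  qed
qed simp

lemma objective_Fk:
  assumes ck: "0 < cdfP Ft k"
  shows "(\<Sum>t<n. \<Sum>x\<in>PiE {..<Suc t} (\<lambda>_. V). ww (qk k) (Suc t) x * (SS a t x * bb a t x) * (\<Sum>v\<in>V. qk k v * ind (v \<le> x t)) ^ (n - Suc t))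
   = (\<Sum>t\<in>{1..n}. \<Sum>l\<in>{1..k}. cdfP Ft l ^ (n - t) / cdfP Ft k ^ n * RR V p a t (real l))"
  unfolding shift1[where n=n]
proof (rule sum.cong[OF refl])
  fix t assume "t \<in> {..<n}"
  then have t: "t < n" by simp
  have "(\<Sum>l\<in>{1..k}. cdfP Ft l ^ (n - Suc t) / cdfP Ft k ^ n * RR V p a (Suc t) (real l))
    = (\<Sum>x\<in>PiE {..<Suc t} (\<lambda>_. V). ww p (Suc t) x * (SS a t x * bb a t x) * (\<Sum>l\<in>{1..k}. ind (x t = real l) * (cdfP Ft l ^ (n - Suc t) / cdfP Ft k ^ n)))"
    unfolding RR_Suc sum_distrib_left by (subst sum.swap) (simp add: algebra_simps)
  also have "\<dots> = (\<Sum>x\<in>PiE {..<Suc t} (\<lambda>_. V). ww (qk k) (Suc t) x * (SS a t x * bb a t x) * (\<Sum>v\<in>V. qk k v * ind (v \<le> x t)) ^ (n - Suc t))"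
  proof (rule sum.cong[OF refl])
    fix x assume x: "x \<in> PiE {..<Suc t} (\<lambda>_. V)"
    then have "x t \<in> V" by (auto simp: PiE_iff)
    then obtain j where j: "j \<in> {1..K}" "x t = real j" by blast
    show "ww p (Suc t) x * (SS a t x * bb a t x) * (\<Sum>l\<in>{1..k}. ind (x t = real l) * (cdfP Ft l ^ (n - Suc t) / cdfP Ft k ^ n)) =
          ww (qk k) (Suc t) x * (SS a t x * bb a t x) * (\<Sum>v\<in>V. qk k v * ind (v \<le> x t)) ^ (n - Suc t)"
      unfolding pw_k[OF x j(2) j(1) t ck] unfolding j(2) by (simp only: sum_ind_pick[OF finite_atLeastAtMost])
  qed
  finally show "(\<Sum>x\<in>PiE {..<Suc t} (\<lambda>_. V). ww (qk k) (Suc t) x * (SS a t x * bb a t x) * (\<Sum>v\<in>V. qk k v * ind (v \<le> x t)) ^ (n - Suc t))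
    = (\<Sum>l\<in>{1..k}. cdfP Ft l ^ (n - Suc t) / cdfP Ft k ^ n * RR V p a (Suc t) (real l))" by simp
qed

end

theorem mainTheorem3:
  fixes n K :: nat and A :: "real measure \<Rightarrow> nat \<Rightarrow> (nat \<Rightarrow> real) \<Rightarrow> real"
    and \<alpha> \<beta> :: real and Ft :: "real measure"
  assumes alg: "online_alg n A"
    and cons: "consistent n A \<alpha>"
    and rob: "robust n A \<beta>"
    and pr: "prior Ft"
    and supp: "measure Ft (real ` {1..K}) = 1"
    and f1: "pmfP Ft 1 > 0"
  shows "\<exists>y :: nat \<Rightarrow> nat \<Rightarrow> real.
     (\<forall>l\<in>{1..K}. y 0 l = 1) \<and>
     (\<forall>t\<in>{1..n}. \<forall>l\<in>{1..K}. 0 \<le> y t l \<and> y t l \<le> 1) \<and>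
     (\<forall>t\<in>{1..n}. \<forall>l\<in>{1..K}.
        Delta Ft t l * y t l - Delta Ft (t - 1) l * cdfP Ft (l - 1) * y (t - 1) l \<ge> 0) \<and>
     (\<forall>t\<in>{1..n}. \<forall>l\<in>{1..K}.
        Delta Ft t l * y t l - Delta Ft (t - 1) l * cdfP Ft (l - 1) * y (t - 1) l
          \<le> (\<Sum>m\<in>{1..l}. Delta Ft (t - 1) m * pmfP Ft l * y (t - 1) m)) \<and>
     (\<Sum>t\<in>{1..n}. \<Sum>l\<in>{1..K}. cdfP Ft l ^ (n - t) *
        ((\<Sum>m\<in>{1..l}. Delta Ft (t - 1) m * pmfP Ft l * y (t - 1) m)
         + Delta Ft (t - 1) l * cdfP Ft (l - 1) * y (t - 1) l - Delta Ft t l * y t l)) \<ge> \<alpha> \<and>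
     (\<forall>k\<in>{1..K}. (\<Sum>t\<in>{1..n}. \<Sum>l\<in>{1..k}. cdfP Ft l ^ (n - t) / cdfP Ft k ^ n *
        ((\<Sum>m\<in>{1..l}. Delta Ft (t - 1) m * pmfP Ft l * y (t - 1) m)
         + Delta Ft (t - 1) l * cdfP Ft (l - 1) * y (t - 1) l - Delta Ft t l * y t l)) \<ge> \<beta>)"
proof -
  have psF: "prob_space Ft" and sFt: "sets Ft = sets borel" using pr by (auto simp: prior_def)
  interpret S: setting Ft K by (rule setting.intro[OF psF sFt supp])
  let ?a = "A Ft"
  let ?V = "real ` {1..K}"
  have ab: "ab ?a" using alg unfolding online_alg_def ab_def by blast
  have na: "na ?a" using alg unfolding online_alg_def na_def by blast
  have me: "\<And>t. ?a t \<in> borel_measurable (PiM {..<n} (\<lambda>_. borel))" using alg unfolding online_alg_def by blast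
  define Q where "Q t l = QQ ?V S.p ?a t (real l)" for t l
  define y where "y t l = (if t = 0 then 1 else if Delta Ft t l = 0 then 1 else Q t l / Delta Ft t l)" for t l
  have Qb: "0 \<le> Q t l \<and> Q t l \<le> Delta Ft t l" if l: "l \<in> {1..K}" "t \<noteq> 0" for t l
  proof -
    have D: "Delta Ft t l = S.DD t l" by (rule S.Delta_DD[OF l(1)])
    have "0 \<le> Q t l" unfolding Q_def by (rule S.QQ_ge0[OF ab])
    moreover have "Q t l \<le> Delta Ft t l" unfolding Q_def D by (rule S.QQ_le_DD[OF ab])
    ultimately show ?thesis by simp
  qed
  have DY: "Delta Ft t l * y t l = Q t l" if l: "l \<in> {1..K}" for t l
  proof (cases "t = 0")
    case True
    then show ?thesis unfolding y_def Q_def using S.QQ_0[of ?a l] by (simp add: Delta_def ind_def)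
  next
    case False
    show ?thesis
    proof (cases "Delta Ft t l = 0")
      case True then show ?thesis using Qb[OF l False] False by (simp add: y_def)
    next
      case False2: False then show ?thesis using False by (simp add: y_def)
    qed
  qed
  have ybd: "0 \<le> y t l \<and> y t l \<le> 1" if l: "l \<in> {1..K}" for t l
  proof (cases "t = 0 \<or> Delta Ft t l = 0")
    case True then show ?thesis by (auto simp: y_def)
  next
    case False
    then have y: "y t l = Q t l / Delta Ft t l" by (simp add: y_def)
    from Qb[OF l] False have "0 \<le> Q t l" "Q t l \<le> Delta Ft t l" by auto
    then show ?thesis unfolding y using False by (simp add: divide_le_eq_1)
  qed
  have rec: "Q t l = Q (t - 1) l * cdfP Ft (l - 1) + pmfP Ft l * (\<Sum>m\<in>{1..l}. Q (t - 1) m) - RR ?V S.p ?a t (real l)"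
    if t: "1 \<le> t" and l: "l \<in> {1..K}" for t l
  proof -
    have "Suc (t - 1) = t" using t by simp
    then show ?thesis using S.QQ_rec[OF na l, of "t - 1"] unfolding Q_def by simp
  qed
  have paren: "(\<Sum>m\<in>{1..l}. Delta Ft (t - 1) m * pmfP Ft l * y (t - 1) m)
         + Delta Ft (t - 1) l * cdfP Ft (l - 1) * y (t - 1) l - Delta Ft t l * y t l = RR ?V S.p ?a t (real l)"
    if t: "t \<in> {1..n}" and l: "l \<in> {1..K}" for t l
  proof -
    have s: "(\<Sum>m\<in>{1..l}. Delta Ft (t - 1) m * pmfP Ft l * y (t - 1) m) = pmfP Ft l * (\<Sum>m\<in>{1..l}. Q (t - 1) m)"
      unfolding sum_distrib_left
    proof (rule sum.cong[OF refl])
      fix m assume "m \<in> {1..l}"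
      then have m: "m \<in> {1..K}" using l by auto
      have "Delta Ft (t - 1) m * pmfP Ft l * y (t - 1) m = pmfP Ft l * (Delta Ft (t - 1) m * y (t - 1) m)"
        by (simp only: mult_ac)
      then show "Delta Ft (t - 1) m * pmfP Ft l * y (t - 1) m = pmfP Ft l * Q (t - 1) m"
        unfolding DY[OF m] .
    qed
    have c: "Delta Ft (t - 1) l * cdfP Ft (l - 1) * y (t - 1) l = Q (t - 1) l * cdfP Ft (l - 1)"
    proof -
      have "Delta Ft (t - 1) l * cdfP Ft (l - 1) * y (t - 1) l = (Delta Ft (t - 1) l * y (t - 1) l) * cdfP Ft (l - 1)"
        by (simp only: mult_ac)
      then show ?thesis unfolding DY[OF l] .
    qed
    show ?thesis unfolding s c DY[OF l] using rec[of t l] t l by simp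
  qed
  have succ_Ft: "success_prob n A Ft Ft \<le> (\<Sum>t\<in>{1..n}. \<Sum>l\<in>{1..K}. cdfP Ft l ^ (n - t) * RR ?V S.p ?a t (real l))"
  proof -
    have "success_prob n A Ft Ft \<le> (\<Sum>t<n. \<Sum>x\<in>PiE {..<Suc t} (\<lambda>_. ?V). ww S.p (Suc t) x * (SS ?a t x * bb ?a t x) * (\<Sum>v\<in>?V. S.p v * ind (v \<le> x t)) ^ (n - Suc t))"
      by (rule S.success_generic[where A=A and n=n and F=Ft and q=S.p, OF psF sFt supp _ ab na me]) (simp add: S.p_def)
    also have "\<dots> = (\<Sum>t\<in>{1..n}. \<Sum>l\<in>{1..K}. cdfP Ft l ^ (n - t) * RR ?V S.p ?a t (real l))"
      by (rule S.objective_Ft)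
    finally show ?thesis .
  qed
  have succ_Fk: "success_prob n A Ft (S.Fk k) \<le> (\<Sum>t\<in>{1..n}. \<Sum>l\<in>{1..k}. cdfP Ft l ^ (n - t) / cdfP Ft k ^ n * RR ?V S.p ?a t (real l))"
    if ck: "0 < cdfP Ft k" for k
  proof -
    have pk: "prior (S.Fk k)" by (rule S.prior_Fk[OF pr ck])
    then have psk: "prob_space (S.Fk k)" by (simp add: prior_def)
    have "success_prob n A Ft (S.Fk k) \<le> (\<Sum>t<n. \<Sum>x\<in>PiE {..<Suc t} (\<lambda>_. ?V). ww (S.qk k) (Suc t) x * (SS ?a t x * bb ?a t x) * (\<Sum>v\<in>?V. S.qk k v * ind (v \<le> x t)) ^ (n - Suc t))"
      by (rule S.success_generic[where A=A and n=n and F="S.Fk k" and q="S.qk k", OF psk S.sets_Fk S.Fk_V[OF ck] S.Fk_single ab na me])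
    also have "\<dots> = (\<Sum>t\<in>{1..n}. \<Sum>l\<in>{1..k}. cdfP Ft l ^ (n - t) / cdfP Ft k ^ n * RR ?V S.p ?a t (real l))"
      by (rule S.objective_Fk[OF ck])
    finally show ?thesis .
  qed
  show ?thesis
  proof (rule exI[of _ y], intro conjI ballI)
    fix l assume "l \<in> {1..K}" then show "y 0 l = 1" by (simp add: y_def)
  next
    fix t l assume "t \<in> {1..n}" "l \<in> {1..K}" then show "0 \<le> y t l" using ybd by blast
  next
    fix t l assume "t \<in> {1..n}" "l \<in> {1..K}" then show "y t l \<le> 1" using ybd by blast
  next
    fix t l assume t: "t \<in> {1..n}" and l: "l \<in> {1..K}"
    have e: "Suc (t - 1) = t" using t by simp
    have A0: "Q (Suc (t - 1)) l \<ge> Q (t - 1) l * cdfP Ft (l - 1)"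
      using QQ_Suc_ge[OF S.finV S.V1 na ab S.p0V, of "t - 1" "real l"] S.cdf_lt[of l] l unfolding Q_def by simp
    then have A: "Q t l \<ge> Q (t - 1) l * cdfP Ft (l - 1)" unfolding e .
    have C: "Delta Ft (t - 1) l * cdfP Ft (l - 1) * y (t - 1) l = Q (t - 1) l * cdfP Ft (l - 1)"
    proof -
      have "Delta Ft (t - 1) l * cdfP Ft (l - 1) * y (t - 1) l = (Delta Ft (t - 1) l * y (t - 1) l) * cdfP Ft (l - 1)"
        by (simp only: mult_ac)
      then show ?thesis unfolding DY[OF l] .
    qed
    show "Delta Ft t l * y t l - Delta Ft (t - 1) l * cdfP Ft (l - 1) * y (t - 1) l \<ge> 0"
      unfolding C DY[OF l, of t] using A by linarith
  next
    fix t l assume t: "t \<in> {1..n}" and l: "l \<in> {1..K}"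
    show "Delta Ft t l * y t l - Delta Ft (t - 1) l * cdfP Ft (l - 1) * y (t - 1) l
          \<le> (\<Sum>m\<in>{1..l}. Delta Ft (t - 1) m * pmfP Ft l * y (t - 1) m)"
      using paren[OF t l] S.RR_ge0[OF ab, of t "real l"] by linarith
  next
    have "(\<Sum>t\<in>{1..n}. \<Sum>l\<in>{1..K}. cdfP Ft l ^ (n - t) *
        ((\<Sum>m\<in>{1..l}. Delta Ft (t - 1) m * pmfP Ft l * y (t - 1) m)
         + Delta Ft (t - 1) l * cdfP Ft (l - 1) * y (t - 1) l - Delta Ft t l * y t l))
      = (\<Sum>t\<in>{1..n}. \<Sum>l\<in>{1..K}. cdfP Ft l ^ (n - t) * RR ?V S.p ?a t (real l))"
    proof (intro sum.cong refl)
      fix t l assume t: "t \<in> {1..n}" and l: "l \<in> {1..K}"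
      show "cdfP Ft l ^ (n - t) *
        ((\<Sum>m\<in>{1..l}. Delta Ft (t - 1) m * pmfP Ft l * y (t - 1) m)
         + Delta Ft (t - 1) l * cdfP Ft (l - 1) * y (t - 1) l - Delta Ft t l * y t l)
        = cdfP Ft l ^ (n - t) * RR ?V S.p ?a t (real l)"
        unfolding paren[OF t l] ..
    qed
    moreover have "\<alpha> \<le> success_prob n A Ft Ft" using cons pr unfolding consistent_def by blast
    ultimately show "(\<Sum>t\<in>{1..n}. \<Sum>l\<in>{1..K}. cdfP Ft l ^ (n - t) *
        ((\<Sum>m\<in>{1..l}. Delta Ft (t - 1) m * pmfP Ft l * y (t - 1) m)
         + Delta Ft (t - 1) l * cdfP Ft (l - 1) * y (t - 1) l - Delta Ft t l * y t l)) \<ge> \<alpha>"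
      using succ_Ft by linarith
  next
    fix k assume k: "k \<in> {1..K}"
    have ck: "0 < cdfP Ft k" by (rule S.ck_pos[OF f1 k])
    have "(\<Sum>t\<in>{1..n}. \<Sum>l\<in>{1..k}. cdfP Ft l ^ (n - t) / cdfP Ft k ^ n *
        ((\<Sum>m\<in>{1..l}. Delta Ft (t - 1) m * pmfP Ft l * y (t - 1) m)
         + Delta Ft (t - 1) l * cdfP Ft (l - 1) * y (t - 1) l - Delta Ft t l * y t l))
      = (\<Sum>t\<in>{1..n}. \<Sum>l\<in>{1..k}. cdfP Ft l ^ (n - t) / cdfP Ft k ^ n * RR ?V S.p ?a t (real l))"
    proof (intro sum.cong refl)
      fix t l assume t: "t \<in> {1..n}" and l: "l \<in> {1..k}"
      then have l': "l \<in> {1..K}" using k by auto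
      show "cdfP Ft l ^ (n - t) / cdfP Ft k ^ n *
        ((\<Sum>m\<in>{1..l}. Delta Ft (t - 1) m * pmfP Ft l * y (t - 1) m)
         + Delta Ft (t - 1) l * cdfP Ft (l - 1) * y (t - 1) l - Delta Ft t l * y t l)
        = cdfP Ft l ^ (n - t) / cdfP Ft k ^ n * RR ?V S.p ?a t (real l)"
        unfolding paren[OF t l'] ..
    qed
    moreover have "\<beta> \<le> success_prob n A Ft (S.Fk k)"
      using rob pr S.prior_Fk[OF pr ck] unfolding robust_def by blast
    ultimately show "(\<Sum>t\<in>{1..n}. \<Sum>l\<in>{1..k}. cdfP Ft l ^ (n - t) / cdfP Ft k ^ n *
        ((\<Sum>m\<in>{1..l}. Delta Ft (t - 1) m * pmfP Ft l * y (t - 1) m)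
         + Delta Ft (t - 1) l * cdfP Ft (l - 1) * y (t - 1) l - Delta Ft t l * y t l)) \<ge> \<beta>"
      using succ_Fk[OF ck] by linarith
  qed
qed

end
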